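(* Under the setting in the context, for every $\pi\in\Pi_\rho$, $$\sup_{r\in\mathcal U^{(1)}_\varepsilon}\Big[\sup_{\beta\in\Pi_\rho}J_r(\beta)-J_r(\pi)\Big]=\sup_{\beta\in\Pi_\rho}\Big\{J_{\hat r}(\beta)-J_{\hat r}(\pi)+\varepsilon\,C_{\infty,\mathrm{rel}}(\beta,\pi;\mu,\mathcal D)\Big\}.$$
   Context: Setting: prompts $x\sim\mathcal D$ on a space $\mathcal X$; a finite response set $\mathcal Y$; reward functions $r:\mathcal X\times\mathcal Y\to\mathbb R$ (measurable, with the expectations below finite), $r(x)\in\mathbb R^{\mathcal Y}$ the promptwise vector; $\hat r$ a fixed proxy reward. $\Pi_\rho$ is a nonempty set of policies (a local policy class); each $\pi\in\Pi_\rho$ has a bounded measurable linear representation $z_\pi(x)\in\mathbb R^{\mathcal Y}$ (e.g. $z_\pi(x)=\pi(\cdot\mid x)$) with $J_r(\pi)=\mathbb E_{x\sim\mathcal D}[\langle z_\pi(x),r(x)\rangle]$. For each $x$, $\mu_x$ is a probability distribution on $\mathcal Y$ with $\mu_x(y)>0$ for all $y$. Weighted norms: $\|e\|_{1,\mu_x}:=\sum_y\mu_x(y)|e(y)|$, $\|v\|_{\infty,\mu_x^{-1}}:=\max_y|v(y)|/\mu_x(y)$. For $\varepsilon>0$, $\mathcal U^{(1)}_\varepsilon:=\{r:\ \mathbb E_{x\sim\mathcal D}[\|r(x)-\hat r(x)\|_{1,\mu_x}]\le\varepsilon\}$. Relative integrated concentrability: $C_{\infty,\mathrm{rel}}(\beta,\pi;\mu,\mathcal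 D):=\operatorname{ess\,sup}_{x\sim\mathcal D}\|z_\beta(x)-z_\pi(x)\|_{\infty,\mu_x^{-1}}$. *)

theory Defs
  imports "HOL-Probability.Probability"
begin

definition ip :: "('y::finite \<Rightarrow> real) \<Rightarrow> ('y \<Rightarrow> real) \<Rightarrow> real" where
  "ip v w = (\<Sum>y\<in>UNIV. v y * w y)"

definition Jval :: "'x measure \<Rightarrow> ('p \<Rightarrow> 'x \<Rightarrow> 'y::finite \<Rightarrow> real)
    \<Rightarrow> ('x \<Rightarrow> 'y \<Rightarrow> real) \<Rightarrow> 'p \<Rightarrow> real" where
  "Jval D z r p = (\<integral>x. ip (z p x) (r x) \<partial>D)"

definition norm1_mu :: "('y::finite \<Rightarrow> real) \<Rightarrow> ('y \<Rightarrow> real) \<Rightarrow> real" where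
  "norm1_mu m e = (\<Sum>y\<in>UNIV. m y * \<bar>e y\<bar>)"

definition norminf_mu_inv :: "('y::finite \<Rightarrow> real) \<Rightarrow> ('y \<Rightarrow> real) \<Rightarrow> real" where
  "norminf_mu_inv m v = Max ((\<lambda>y. \<bar>v y\<bar> / m y) ` UNIV)"

definition reward_ok :: "'x measure \<Rightarrow> 'p set \<Rightarrow> ('p \<Rightarrow> 'x \<Rightarrow> 'y::finite \<Rightarrow> real)
    \<Rightarrow> ('x \<Rightarrow> 'y \<Rightarrow> real) \<Rightarrow> ('x \<Rightarrow> 'y \<Rightarrow> real) \<Rightarrow> ('x \<Rightarrow> 'y \<Rightarrow> real) \<Rightarrow> bool" where
  "reward_ok D PP z mu rhat r \<longleftrightarrow>
     (\<forall>y. (\<lambda>x. r x y) \<in> borel_measurable D) \<and>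
     (\<forall>b\<in>PP. integrable D (\<lambda>x. ip (z b x) (r x))) \<and>
     integrable D (\<lambda>x. norm1_mu (mu x) (\<lambda>y. r x y - rhat x y))"

definition U1 :: "'x measure \<Rightarrow> 'p set \<Rightarrow> ('p \<Rightarrow> 'x \<Rightarrow> 'y::finite \<Rightarrow> real)
    \<Rightarrow> ('x \<Rightarrow> 'y \<Rightarrow> real) \<Rightarrow> ('x \<Rightarrow> 'y \<Rightarrow> real) \<Rightarrow> real \<Rightarrow> ('x \<Rightarrow> 'y \<Rightarrow> real) set" where
  "U1 D PP z mu rhat eps = {r. reward_ok D PP z mu rhat r \<and>
      (\<integral>x. norm1_mu (mu x) (\<lambda>y. r x y - rhat x y) \<partial>D) \<le> eps}"

definition Crel :: "'x measure \<Rightarrow> ('x \<Rightarrow> 'y::finite \<Rightarrow> real)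
    \<Rightarrow> ('p \<Rightarrow> 'x \<Rightarrow> 'y \<Rightarrow> real) \<Rightarrow> 'p \<Rightarrow> 'p \<Rightarrow> ereal" where
  "Crel D mu z b p = esssup D (\<lambda>x. ereal (norminf_mu_inv (mu x) (\<lambda>y. z b x y - z p x y)))"

end

theory Submission imports Defs begin
lemma ip_diff_left: "ip (\<lambda>y. a y - b y) w = ip a w - ip b w"
  unfolding ip_def by (simp add: left_diff_distrib sum_subtractf)
lemma ip_add_right: "ip v (\<lambda>y. a y + b y) = ip v a + ip v b"
  unfolding ip_def by (simp add: distrib_left sum.distrib)
lemma ip_single: "ip v (\<lambda>y. if y = y0 then k else 0) = v y0 * k"
  unfolding ip_def by (simp add: if_distrib cong: if_cong)
lemma norm1_single: "norm1_mu m (\<lambda>y. if y = y0 then k else 0) = m y0 * \<bar>k\<bar>"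
  unfolding norm1_mu_def by (simp add: if_distrib cong: if_cong)
lemma ip_key: "ip a r - ip c r - (ip a h - ip c h) = ip (\<lambda>y. a y - c y) (\<lambda>y. r y - h y)"
  unfolding ip_def by (simp add: algebra_simps sum_subtractf sum.distrib)
lemma norminf_ge: assumes "\<forall>y. m y > 0" shows "\<bar>d y\<bar> \<le> norminf_mu_inv m d * m y"
proof -
  have "\<bar>d y\<bar> / m y \<le> norminf_mu_inv m d" unfolding norminf_mu_inv_def by (rule Max_ge) auto
  thus ?thesis using assms by (simp add: pos_divide_le_eq)
qed
lemma norminf_nonneg: assumes "\<forall>y. m y > 0" shows "0 \<le> norminf_mu_inv m d"
proof -
  have "0 \<le> \<bar>d undefined\<bar> / m undefined" using assms by (intro divide_nonneg_pos) auto
  also have "\<dots> \<le> norminf_mu_inv m d" unfolding norminf_mu_inv_def by (rule Max_ge) auto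
  finally show ?thesis .
qed
lemma holder: assumes "\<forall>y. m y > 0" shows "ip d e \<le> norminf_mu_inv m d * norm1_mu m e"
proof -
  have "d y * e y \<le> norminf_mu_inv m d * (m y * \<bar>e y\<bar>)" for y
  proof -
    have "d y * e y \<le> \<bar>d y\<bar> * \<bar>e y\<bar>" by (metis abs_ge_self abs_mult)
    also have "\<dots> \<le> norminf_mu_inv m d * m y * \<bar>e y\<bar>"
      by (rule mult_right_mono) (use norminf_ge[OF assms] in auto)
    finally show ?thesis by simp
  qed
  then show ?thesis unfolding ip_def norm1_mu_def by (simp add: sum_distrib_left sum_mono)
qed
lemma "(x::ereal) \<le> R + ereal q \<Longrightarrow> x - ereal q \<le> R" by (cases x; cases R) auto
lemma "(x::ereal) < y \<Longrightarrow> True" using dense_le by simp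

theorem mainTheorem15:
  fixes D :: "'x measure" and PP :: "'p set" and z :: "'p \<Rightarrow> 'x \<Rightarrow> 'y::finite \<Rightarrow> real"
    and mu :: "'x \<Rightarrow> 'y \<Rightarrow> real" and rhat :: "'x \<Rightarrow> 'y \<Rightarrow> real"
    and eps :: real and p :: 'p
  assumes "prob_space D"
    and "PP \<noteq> {}"
    and z_meas: "\<forall>b\<in>PP. \<forall>y. (\<lambda>x. z b x y) \<in> borel_measurable D"
    and z_bdd: "\<forall>b\<in>PP. \<exists>B. \<forall>x\<in>space D. \<forall>y. \<bar>z b x y\<bar> \<le> B"
    and mu_meas: "\<forall>y. (\<lambda>x. mu x y) \<in> borel_measurable D"
    and mu_pos: "\<forall>x\<in>space D. \<forall>y. mu x y > 0"
    and mu_sum: "\<forall>x\<in>space D. (\<Sum>y\<in>UNIV. mu x y) = 1"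
    and rhat_ok: "reward_ok D PP z mu rhat rhat"
    and "eps > 0"
    and "p \<in> PP"
  shows "(SUP r\<in>U1 D PP z mu rhat eps.
            (SUP b\<in>PP. ereal (Jval D z r b)) - ereal (Jval D z r p))
       = (SUP b\<in>PP. ereal (Jval D z rhat b - Jval D z rhat p) + ereal eps * Crel D mu z b p)"
proof -
  interpret P: prob_space D by fact
  note pP = \<open>p \<in> PP\<close>
  note epos = \<open>eps > 0\<close>
  define G where "G b x = norminf_mu_inv (mu x) (\<lambda>y. z b x y - z p x y)" for b x
  define RH where "RH b = ereal (Jval D z rhat b - Jval D z rhat p) + ereal eps * Crel D mu z b p" for b
  define LH where "LH = (SUP r\<in>U1 D PP z mu rhat eps.
            (SUP b\<in>PP. ereal (Jval D z r b)) - ereal (Jval D z r p))"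
  have Crel_G: "Crel D mu z b p = esssup D (\<lambda>x. ereal (G b x))" for b
    unfolding Crel_def G_def ..
  have zm[measurable]: "(\<lambda>x. z b x y) \<in> borel_measurable D" if "b \<in> PP" for b y
    using z_meas that by auto
  have mum[measurable]: "(\<lambda>x. mu x y) \<in> borel_measurable D" for y
    using mu_meas by auto
  have Gm[measurable]: "(\<lambda>x. G b x) \<in> borel_measurable D" if "b \<in> PP" for b
    unfolding G_def norminf_mu_inv_def using that pP by measurable
  have G_nonneg: "0 \<le> G b x" if "x \<in> space D" for b x
    unfolding G_def using norminf_nonneg mu_pos that by blast
  have Crel_nonneg: "0 \<le> Crel D mu z b p" if "b \<in> PP" for b
  proof -
    have "0 = esssup D (\<lambda>x. (0::ereal))" using P.emeasure_space_1 by (simp add: esssup_const)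
    also have "\<dots> \<le> esssup D (\<lambda>x. ereal (G b x))"
      by (rule esssup_AE_mono) (auto intro!: AE_I2 simp: G_nonneg)
    finally show ?thesis by (simp add: Crel_G)
  qed
  have rhat_m[measurable]: "(\<lambda>x. rhat x y) \<in> borel_measurable D" for y
    using rhat_ok unfolding reward_ok_def by auto
  have rhat_int: "integrable D (\<lambda>x. ip (z b x) (rhat x))" if "b \<in> PP" for b
    using rhat_ok that unfolding reward_ok_def by auto
  have keydiff: "Jval D z r b - Jval D z r p = (Jval D z rhat b - Jval D z rhat p)
        + (\<integral>x. ip (\<lambda>y. z b x y - z p x y) (\<lambda>y. r x y - rhat x y) \<partial>D)"
    and keyint: "integrable D (\<lambda>x. ip (\<lambda>y. z b x y - z p x y) (\<lambda>y. r x y - rhat x y))"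
    if rok: "reward_ok D PP z mu rhat r" and b: "b \<in> PP" for r b
  proof -
    have i1: "integrable D (\<lambda>x. ip (z b x) (r x))" "integrable D (\<lambda>x. ip (z p x) (r x))"
      using rok b pP unfolding reward_ok_def by auto
    have i2: "integrable D (\<lambda>x. ip (z b x) (rhat x))" "integrable D (\<lambda>x. ip (z p x) (rhat x))"
      using rhat_int b pP by auto
    have eq: "(\<lambda>x. ip (\<lambda>y. z b x y - z p x y) (\<lambda>y. r x y - rhat x y)) =
       (\<lambda>x. ip (z b x) (r x) - ip (z p x) (r x) - (ip (z b x) (rhat x) - ip (z p x) (rhat x)))"
      using ip_key[of "z b x" "r x" "z p x" "rhat x" for x] by (auto simp: fun_eq_iff)
    show "integrable D (\<lambda>x. ip (\<lambda>y. z b x y - z p x y) (\<lambda>y. r x y - rhat x y))"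
      unfolding eq using i1 i2 by auto
    show "Jval D z r b - Jval D z r p = (Jval D z rhat b - Jval D z rhat p)
        + (\<integral>x. ip (\<lambda>y. z b x y - z p x y) (\<lambda>y. r x y - rhat x y) \<partial>D)"
      unfolding eq Jval_def using i1 i2 by (simp add: Bochner_Integration.integral_diff)
  qed
  have ub: "ereal (Jval D z r b) \<le> RH b + ereal (Jval D z r p)"
    if r: "r \<in> U1 D PP z mu rhat eps" and b: "b \<in> PP" for r b
  proof -
    have rok: "reward_ok D PP z mu rhat r" and rint: "(\<integral>x. norm1_mu (mu x) (\<lambda>y. r x y - rhat x y) \<partial>D) \<le> eps"
      using r unfolding U1_def by auto
    have nint: "integrable D (\<lambda>x. norm1_mu (mu x) (\<lambda>y. r x y - rhat x y))"
      using rok unfolding reward_ok_def by auto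
    show ?thesis
    proof (cases "Crel D mu z b p")
      case (real c)
      have AEc: "AE x in D. G b x \<le> c"
        using esssup_AE[of "\<lambda>x. ereal (G b x)" D] real by (simp add: Crel_G)
      have c0: "0 \<le> c" using Crel_nonneg[OF b] real by simp
      have "(\<integral>x. ip (\<lambda>y. z b x y - z p x y) (\<lambda>y. r x y - rhat x y) \<partial>D)
            \<le> (\<integral>x. c * norm1_mu (mu x) (\<lambda>y. r x y - rhat x y) \<partial>D)"
      proof (rule integral_mono_AE)
        show "integrable D (\<lambda>x. ip (\<lambda>y. z b x y - z p x y) (\<lambda>y. r x y - rhat x y))"
          by (rule keyint[OF rok b])
        show "integrable D (\<lambda>x. c * norm1_mu (mu x) (\<lambda>y. r x y - rhat x y))"
          using nint by auto
        show "AE x in D. ip (\<lambda>y. z b x y - z p x y) (\<lambda>y. r x y - rhat x y)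
                \<le> c * norm1_mu (mu x) (\<lambda>y. r x y - rhat x y)"
          using AEc AE_space
        proof eventually_elim
          case (elim x)
          have n0: "0 \<le> norm1_mu (mu x) (\<lambda>y. r x y - rhat x y)"
            unfolding norm1_mu_def using mu_pos elim
            by (intro sum_nonneg) (simp add: less_imp_le)
          have "ip (\<lambda>y. z b x y - z p x y) (\<lambda>y. r x y - rhat x y)
               \<le> G b x * norm1_mu (mu x) (\<lambda>y. r x y - rhat x y)"
            unfolding G_def using holder mu_pos elim by blast
          also have "\<dots> \<le> c * norm1_mu (mu x) (\<lambda>y. r x y - rhat x y)"
            using elim n0 by (intro mult_right_mono) auto
          finally show ?case .
        qed
      qed
      also have "\<dots> = c * (\<integral>x. norm1_mu (mu x) (\<lambda>y. r x y - rhat x y) \<partial>D)" by simp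
      also have "\<dots> \<le> c * eps" using c0 rint by (intro mult_left_mono) auto
      finally have "Jval D z r b - Jval D z r p \<le> (Jval D z rhat b - Jval D z rhat p) + eps * c"
        using keydiff[OF rok b] by (simp add: mult.commute)
      then show ?thesis unfolding RH_def real by simp
    next
      case PInf
      then show ?thesis unfolding RH_def using epos by simp
    next
      case MInf
      then show ?thesis using Crel_nonneg[OF b] by simp
    qed
  qed
  have le1: "LH \<le> (SUP b\<in>PP. RH b)"
    unfolding LH_def
  proof (rule SUP_least)
    fix r assume r: "r \<in> U1 D PP z mu rhat eps"
    have "(SUP b\<in>PP. ereal (Jval D z r b)) \<le> (SUP b\<in>PP. RH b) + ereal (Jval D z r p)"
    proof (rule SUP_least)
      fix b assume b: "b \<in> PP"
      have "ereal (Jval D z r b) \<le> RH b + ereal (Jval D z r p)" by (rule ub[OF r b])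
      also have "\<dots> \<le> (SUP b\<in>PP. RH b) + ereal (Jval D z r p)"
        by (intro add_right_mono SUP_upper b)
      finally show "ereal (Jval D z r b) \<le> (SUP b\<in>PP. RH b) + ereal (Jval D z r p)" .
    qed
    then show "(SUP b\<in>PP. ereal (Jval D z r b)) - ereal (Jval D z r p) \<le> (SUP b\<in>PP. RH b)"
      by (cases "SUP b\<in>PP. ereal (Jval D z r b)"; cases "SUP b\<in>PP. RH b") auto
  qed
  have lbr: "ereal (Jval D z r b - Jval D z r p) \<le> LH"
    if r: "r \<in> U1 D PP z mu rhat eps" and b: "b \<in> PP" for r b
  proof -
    have "ereal (Jval D z r b) \<le> (SUP b\<in>PP. ereal (Jval D z r b))" by (rule SUP_upper[OF b])
    then have "ereal (Jval D z r b - Jval D z r p) \<le> (SUP b\<in>PP. ereal (Jval D z r b)) - ereal (Jval D z r p)"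
      by (cases "SUP b\<in>PP. ereal (Jval D z r b)") auto
    also have "\<dots> \<le> LH" unfolding LH_def by (rule SUP_upper[OF r])
    finally show ?thesis .
  qed
  have rhatU: "rhat \<in> U1 D PP z mu rhat eps"
    unfolding U1_def using rhat_ok epos by (simp add: norm1_mu_def)
  have constr: "\<exists>r\<in>U1 D PP z mu rhat eps. Jval D z r b - Jval D z r p \<ge> (Jval D z rhat b - Jval D z rhat p) + eps * t"
    if b: "b \<in> PP" and t0: "0 < t" and tC: "ereal t < Crel D mu z b p" for b t
  proof -
    define d where "d x y = z b x y - z p x y" for x y
    define S where "S y = {x\<in>space D. t < \<bar>z b x y - z p x y\<bar> / mu x y}" for y
    have Ssets[measurable]: "S y \<in> sets D" for y unfolding S_def using b pP by measurable
    have Ssp: "S y \<subseteq> space D" for y unfolding S_def by auto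
    have "\<exists>y0. emeasure D (S y0) \<noteq> 0"
    proof (rule ccontr)
      assume "\<not> ?thesis"
      then have "\<forall>y\<in>UNIV. AE x in D. x \<notin> S y"
        by (auto intro!: AE_not_in simp: null_sets_def)
      then have "AE x in D. \<forall>y\<in>UNIV. x \<notin> S y"
        by (subst AE_finite_all) auto
      then have "AE x in D. ereal (G b x) \<le> ereal t"
        using AE_space
      proof eventually_elim
        case (elim x)
        have "\<bar>z b x y - z p x y\<bar> / mu x y \<le> t" for y
          using elim unfolding S_def using not_less by blast
        then show ?case unfolding G_def norminf_mu_inv_def by (simp add: Max_le_iff)
      qed
      then have "esssup D (\<lambda>x. ereal (G b x)) \<le> ereal t"
        using b by (intro esssup_I) auto
      then show False using tC by (simp add: Crel_G)
    qed
    then obtain y0 where y0: "emeasure D (S y0) \<noteq> 0" by blast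
    define m where "m = (\<integral>x. indicator (S y0) x * mu x y0 \<partial>D)"
    have mu_le1: "mu x y \<le> 1" if "x \<in> space D" for x y
    proof -
      have "mu x y \<le> (\<Sum>y\<in>UNIV. mu x y)"
        using mu_pos that by (intro member_le_sum) (auto intro: less_imp_le)
      then show ?thesis using mu_sum that by simp
    qed
    have mint: "integrable D (\<lambda>x. indicator (S y0) x * mu x y0)"
    proof (rule P.integrable_const_bound[where B=1])
      show "AE x in D. norm (indicator (S y0) x * mu x y0) \<le> (1::real)"
        using AE_space
      proof eventually_elim
        case (elim x) then show ?case using mu_le1[OF elim, of y0] mu_pos[rule_format, OF elim, of y0]
          by (auto simp: indicator_def)
      qed
    qed measurable
    have m0: "0 \<le> m" unfolding m_def using mu_pos
      by (intro Bochner_Integration.integral_nonneg) (auto simp: indicator_def intro: less_imp_le)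
    have "m \<noteq> 0"
    proof
      assume "m = 0"
      then have "AE x in D. indicator (S y0) x * mu x y0 = 0"
        unfolding m_def using mint mu_pos
        by (subst (asm) integral_nonneg_eq_0_iff_AE) (auto intro!: AE_I2 simp: indicator_def intro: less_imp_le)
      then have "AE x in D. x \<notin> S y0"
        using AE_space by eventually_elim (metis mu_pos indicator_simps(1) mult_cancel_right1 less_irrefl)
      then have "emeasure D (S y0) = 0"
        using Ssp by (subst (asm) AE_iff_measurable[OF Ssets]) auto
      then show False using y0 by simp
    qed
    with m0 have mpos: "0 < m" by simp
    define c where "c = eps / m"
    have cpos: "0 < c" unfolding c_def using mpos epos by simp
    define e where "e x y = (if y = y0 then c * sgn (d x y0) * indicator (S y0) x else 0)" for x y
    define r where "r x y = rhat x y + e x y" for x y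
    have rdiff: "(\<lambda>y. r x y - rhat x y) = e x" for x by (simp add: r_def fun_eq_iff)
    have cabs: "\<bar>c * sgn (d x y0) * indicator (S y0) x\<bar> = c * indicator (S y0) x" for x
    proof (cases "x \<in> S y0")
      case True
      then have "d x y0 \<noteq> 0" using t0 unfolding S_def d_def by auto
      then show ?thesis using True cpos by (simp add: abs_mult)
    qed simp
    have cle: "\<bar>c * sgn (d x y0) * indicator (S y0) x\<bar> \<le> c" for x
      unfolding cabs using cpos by (auto simp: indicator_def)
    have e_lam: "e x = (\<lambda>y. if y = y0 then c * sgn (d x y0) * indicator (S y0) x else 0)" for x
      by (simp add: e_def fun_eq_iff)
    have r_lam: "r x = (\<lambda>y. rhat x y + (if y = y0 then c * sgn (d x y0) * indicator (S y0) x else 0))" for x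
      by (simp add: r_def e_def fun_eq_iff)
    have dm[measurable]: "(\<lambda>x. d x y) \<in> borel_measurable D" for y
      unfolding d_def using b pP by measurable
    have norm_e: "norm1_mu (mu x) (e x) = c * (indicator (S y0) x * mu x y0)" for x
      unfolding e_lam norm1_single cabs by simp
    have ip_e: "ip (\<lambda>y. z b x y - z p x y) (e x) = c * (\<bar>d x y0\<bar> * indicator (S y0) x)" for x
      unfolding e_lam ip_single d_def by (auto simp: sgn_if)
    have rok: "reward_ok D PP z mu rhat r"
      unfolding reward_ok_def
    proof (intro conjI ballI allI)
      fix y show "(\<lambda>x. r x y) \<in> borel_measurable D"
        unfolding r_def e_def by (cases "y = y0") simp_all
    next
      fix b' assume b': "b' \<in> PP"
      obtain B where B: "\<forall>x\<in>space D. \<forall>y. \<bar>z b' x y\<bar> \<le> B" using z_bdd b' by auto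
      have "integrable D (\<lambda>x. z b' x y0 * (c * sgn (d x y0) * indicator (S y0) x))"
      proof (rule P.integrable_const_bound[where B="B * c"])
        show "AE x in D. norm (z b' x y0 * (c * sgn (d x y0) * indicator (S y0) x)) \<le> B * c"
          using AE_space
        proof eventually_elim
          case (elim x)
          then show ?case unfolding real_norm_def abs_mult[of "z b' x y0"]
            using B cle[of x] by (intro mult_mono') auto
        qed
      qed (use b' in measurable)
      then show "integrable D (\<lambda>x. ip (z b' x) (r x))"
        unfolding r_lam ip_add_right ip_single using rhat_int[OF b'] by auto
    next
      show "integrable D (\<lambda>x. norm1_mu (mu x) (\<lambda>y. r x y - rhat x y))"
        unfolding rdiff norm_e using mint by auto
    qed
    have nint: "(\<integral>x. norm1_mu (mu x) (\<lambda>y. r x y - rhat x y) \<partial>D) = eps"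
      unfolding rdiff norm_e using mpos by (simp add: m_def[symmetric] c_def)
    have rU: "r \<in> U1 D PP z mu rhat eps" unfolding U1_def using rok nint by simp
    have kint: "integrable D (\<lambda>x. c * (\<bar>d x y0\<bar> * indicator (S y0) x))"
      using keyint[OF rok b] unfolding rdiff ip_e .
    have "eps * t = (\<integral>x. c * t * (indicator (S y0) x * mu x y0) \<partial>D)"
      using mpos by (simp add: m_def[symmetric] c_def)
    also have "\<dots> \<le> (\<integral>x. c * (\<bar>d x y0\<bar> * indicator (S y0) x) \<partial>D)"
    proof (rule integral_mono)
      show "integrable D (\<lambda>x. c * t * (indicator (S y0) x * mu x y0))" using mint by auto
      show "integrable D (\<lambda>x. c * (\<bar>d x y0\<bar> * indicator (S y0) x))" by (rule kint)
      fix x assume x: "x \<in> space D"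
      show "c * t * (indicator (S y0) x * mu x y0) \<le> c * (\<bar>d x y0\<bar> * indicator (S y0) x)"
      proof (cases "x \<in> S y0")
        case True
        then have "t * mu x y0 < \<bar>d x y0\<bar>" using mu_pos x unfolding S_def d_def
          by (auto simp: pos_less_divide_eq)
        then show ?thesis using True cpos by simp
      qed simp
    qed
    also have "\<dots> = (\<integral>x. ip (\<lambda>y. z b x y - z p x y) (\<lambda>y. r x y - rhat x y) \<partial>D)"
      unfolding rdiff ip_e ..
    finally show ?thesis using keydiff[OF rok b] rU by (intro bexI[of _ r]) auto
  qed
  have le2: "RH b \<le> LH" if b: "b \<in> PP" for b
  proof (rule dense_le)
    fix s assume s: "s < RH b"
    define \<Delta> where "\<Delta> = Jval D z rhat b - Jval D z rhat p"
    show "s \<le> LH"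
    proof (cases "s \<le> ereal \<Delta>")
      case True
      then show ?thesis using lbr[OF rhatU b] unfolding \<Delta>_def by simp
    next
      case False
      have "s \<noteq> \<infinity>" using s by auto
      with False obtain s' where s': "s = ereal s'" "\<Delta> < s'" by (cases s) auto
      define t where "t = (s' - \<Delta>) / eps"
      have t0: "0 < t" unfolding t_def using s' epos by simp
      have tC: "ereal t < Crel D mu z b p"
      proof (cases "Crel D mu z b p")
        case (real c)
        then have "s' < \<Delta> + eps * c" using s s' unfolding RH_def \<Delta>_def by simp
        then show ?thesis unfolding t_def using real epos by (simp add: pos_divide_less_eq mult.commute)
      qed (use Crel_nonneg[OF b] in auto)
      obtain r where r: "r \<in> U1 D PP z mu rhat eps"
        and rJ: "Jval D z r b - Jval D z r p \<ge> \<Delta> + eps * t"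
        using constr[OF b t0 tC] unfolding \<Delta>_def by blast
      have "\<Delta> + eps * t = s'" unfolding t_def using epos by simp
      then have "s \<le> ereal (Jval D z r b - Jval D z r p)" using rJ s' by simp
      also have "\<dots> \<le> LH" by (rule lbr[OF r b])
      finally show ?thesis .
    qed
  qed
  have "LH = (SUP b\<in>PP. RH b)"
    by (rule antisym[OF le1 SUP_least]) (rule le2)
  then show ?thesis unfolding LH_def RH_def .
qed

end
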